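(* For every integer $n\ge6$ there exists a hyperbolic prismatic tetrahedron $\Pi_{3,3}^n$.
   Context: Let $P_{3,3}^n$ be the regular (possibly ideal or hyperideal) hyperbolic tetrahedron centered at a point $O$ with dihedral angle $2\pi/n$ (in the ball model it can be taken as the intersection of the unit ball with the exteriors of the spheres orthogonal to the unit sphere centered at $a(1,1,1),a(1,-1,-1),a(-1,1,-1),a(-1,-1,1)$, whose dihedral angle $\alpha$ satisfies $\cos\alpha=\frac{a^2+3}{3(a^2-1)}$). Let $\Gamma_{3,3}^n$ be the group generated by reflections in the planes of its faces. A prismatic tetrahedron $\Pi_{3,3}^n$ is obtained by choosing a smaller compact regular tetrahedron $Q$ centered at $O$, aligned with $P_{3,3}^n$ (each face of $Q$ perpendicular to the axis through $O$ and the center of the corresponding face of $P_{3,3}^n$) and inside it, such that for every face $F$ of $Q$ the face $F$ and its reflection $F'$ in the corresponding face of $P_{3,3}^n$ bound a prism whose three lateral faces are regular squares; $\Pi_{3,3}^n$ is the union of all $\Gamma_{3,3}^n$-images of these lateral squares. Existence of $\Pi_{3,3}^n$ means existence of such a $Q$. *)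

theory Defs
  imports "HOL-Analysis.Analysis"
begin

(* Points of hyperbolic 3-space: Poincare ball model, the open unit ball in real^3. *)

definition hdist :: "real^3 \<Rightarrow> real^3 \<Rightarrow> real" where
  "hdist x y = arcosh (1 + 2 * (norm (x - y))\<^sup>2 / ((1 - (norm x)\<^sup>2) * (1 - (norm y)\<^sup>2)))"

(* hyperbolic angle at B between the geodesics BA and BC (hyperbolic law of cosines) *)
definition hangle :: "real^3 \<Rightarrow> real^3 \<Rightarrow> real^3 \<Rightarrow> real" where
  "hangle A B C = arccos ((cosh (hdist B A) * cosh (hdist B C) - cosh (hdist A C))
                           / (sinh (hdist B A) * sinh (hdist B C)))"

(* Passage between the Poincare ball and the Klein model (where geodesics, planes and
   convex hulls are Euclidean ones). *)
definition klein :: "real^3 \<Rightarrow> real^3" where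
  "klein x = (2 / (1 + (norm x)\<^sup>2)) *\<^sub>R x"

definition ball_of_klein :: "real^3 \<Rightarrow> real^3" where
  "ball_of_klein k = (1 / (1 + sqrt (1 - (norm k)\<^sup>2))) *\<^sub>R k"

definition hhull :: "(real^3) set \<Rightarrow> (real^3) set" where
  "hhull S = ball_of_klein ` (convex hull (klein ` S))"

definition vdir :: "nat \<Rightarrow> real^3" where
  "vdir i = (if i = 0 then vector [1, 1, 1] else if i = 1 then vector [1, -1, -1]
             else if i = 2 then vector [-1, 1, -1] else vector [-1, -1, 1])"

(* face i of P: sphere orthogonal to the unit sphere, centred at a * vdir i / |vdir i| *)
definition P_center :: "real \<Rightarrow> nat \<Rightarrow> real^3" where
  "P_center a i = (a / sqrt 3) *\<^sub>R vdir i"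

definition P_radius :: "real \<Rightarrow> real" where
  "P_radius a = sqrt (a\<^sup>2 - 1)"

(* the regular tetrahedron P (intersection of the ball with the closed exteriors) *)
definition tetP :: "real \<Rightarrow> (real^3) set" where
  "tetP a = {x. norm x < 1 \<and> (\<forall>i<4. dist x (P_center a i) \<ge> P_radius a)}"

(* hyperbolic reflection in the plane of face i of P (inversion in the sphere) *)
definition reflP :: "real \<Rightarrow> nat \<Rightarrow> real^3 \<Rightarrow> real^3" where
  "reflP a i x = P_center a i
      + ((P_radius a)\<^sup>2 / (norm (x - P_center a i))\<^sup>2) *\<^sub>R (x - P_center a i)"

definition regular_square :: "real^3 \<Rightarrow> real^3 \<Rightarrow> real^3 \<Rightarrow> real^3 \<Rightarrow> bool" where
  "regular_square A B C D \<longleftrightarrow>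
     coplanar (klein ` {A, B, C, D}) \<and>
     hdist A B > 0 \<and> hdist A B = hdist B C \<and> hdist B C = hdist C D \<and> hdist C D = hdist D A \<and>
     hangle D A B = hangle A B C \<and> hangle A B C = hangle B C D \<and> hangle B C D = hangle C D A"

(* q 0 .. q 3 are the vertices of a compact regular tetrahedron Q centred at O = 0, aligned
   with P: the face of Q opposite q i (its face number i) lies in a hyperbolic plane
   perpendicular to the axis through O in direction vdir i (towards the centre of face i of P),
   on the same side of O as face i of P.  In the Klein model such planes are the Euclidean
   planes {k. k \<bullet> vdir i = t}. *)
definition aligned_regular_tet :: "(nat \<Rightarrow> real^3) \<Rightarrow> bool" where
  "aligned_regular_tet q \<longleftrightarrow>
     (\<forall>i<4. norm (q i) < 1) \<and>
     hdist (q 0) (q 1) > 0 \<and>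
     (\<forall>i<4. \<forall>j<4. i \<noteq> j \<longrightarrow> hdist (q i) (q j) = hdist (q 0) (q 1)) \<and>
     (\<forall>i<4. hdist 0 (q i) = hdist 0 (q 0)) \<and>
     (\<forall>i<4. \<exists>t>0. \<forall>j<4. j \<noteq> i \<longrightarrow> klein (q j) \<bullet> vdir i = t)"

definition prismatic_exists :: "real \<Rightarrow> bool" where
  "prismatic_exists a \<longleftrightarrow>
     (\<exists>q. aligned_regular_tet q \<and> hhull (q ` {..<4}) \<subseteq> tetP a \<and>
        (\<forall>i<4. \<forall>j<4. \<forall>k<4. j \<noteq> i \<and> k \<noteq> i \<and> j \<noteq> k \<longrightarrow>
           regular_square (q j) (q k) (reflP a i (q k)) (reflP a i (q j))))"

end

theory Submission
  imports Defs
begin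

lemmas ip = inner_add_left inner_add_right inner_diff_left inner_diff_right inner_scaleR_left inner_scaleR_right

lemma refl_facts:
  fixes A B c :: "real^3" and R l :: real
  assumes c: "inner c c = R^2 + 1" and m: "inner A A - 2 * inner A c + inner c c = m" and lm: "l * m = R^2"
  shows "1 - inner (c + l *\<^sub>R (A - c)) (c + l *\<^sub>R (A - c)) = l * (1 - inner A A)"
proof -
  have e: "inner (c + l *\<^sub>R (A - c)) (c + l *\<^sub>R (A - c)) = inner c c + 2*l*(inner A c - inner c c) + l*(l*(inner A A - 2 * inner A c + inner c c))"
    by (simp add: ip inner_commute algebra_simps power2_eq_square)
  have f0: "l * (inner A A - 2 * inner A c + inner c c) = R^2" using lm m by simp
  have f: "l * inner A A = R^2 + 2 * l * inner A c - l * inner c c"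
    using f0 unfolding ring_distribs by linarith
  show ?thesis unfolding e m lm using f c by (simp add: algebra_simps)
qed

definition dl :: "real^3 \<Rightarrow> real^3 \<Rightarrow> real" where
  "dl x y = inner (x - y) (x - y) / ((1 - inner x x) * (1 - inner y y))"

lemma hdist_dl: "hdist x y = arcosh (1 + 2 * dl x y)"
  by (simp add: hdist_def dl_def power2_norm_eq_inner)

lemma dl_sym: "dl x y = dl y x"
  by (simp add: dl_def inner_commute mult.commute ip algebra_simps)

lemma hdist_sym: "hdist x y = hdist y x"
  by (simp add: hdist_dl dl_sym)

lemma square_lemma:
  fixes A B c :: "real^3" and R :: real
  assumes R: "R > 0" and c: "inner c c = R^2 + 1"
    and AB: "inner A A = inner B B" "inner A A < 1" "inner A c = inner B c" "A \<noteq> B"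
    and eq: "(inner A A - 2 * inner A c + 1)^2 = R^2 * inner (A - B) (A - B)"
  shows "regular_square A B (c + (R^2/(norm (B - c))^2) *\<^sub>R (B - c)) (c + (R^2/(norm (A - c))^2) *\<^sub>R (A - c))"
proof -
  define k where "k = inner A A"
  define t where "t = inner A c"
  define p where "p = inner A B"
  define m where "m = k - 2 * t + inner c c"
  have mA: "inner A A - 2 * inner A c + inner c c = m" by (simp add: m_def k_def t_def)
  have mB: "inner B B - 2 * inner B c + inner c c = m" using AB by (simp add: m_def k_def t_def)
  have nA: "(norm (A - c))^2 = m" using mA by (simp add: power2_norm_eq_inner ip inner_commute algebra_simps)
  have nB: "(norm (B - c))^2 = m" using mB by (simp add: power2_norm_eq_inner ip inner_commute algebra_simps)
  have k1: "k < 1" using AB k_def by simp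
  have Anc: "A \<noteq> c" using AB(2) c R by (smt (verit) zero_le_power2)
  have mpos: "m > 0" using nA Anc by (metis zero_less_norm_iff right_minus_eq zero_less_power)
  define l where "l = R^2 / m"
  have lm: "l * m = R^2" using mpos by (simp add: l_def)
  have l0: "l > 0" using mpos R by (simp add: l_def)
  define A' where "A' = c + l *\<^sub>R (A - c)"
  define B' where "B' = c + l *\<^sub>R (B - c)"
  have eqA: "c + (R^2/(norm (A - c))^2) *\<^sub>R (A - c) = A'" by (simp add: A'_def nA l_def)
  have eqB: "c + (R^2/(norm (B - c))^2) *\<^sub>R (B - c) = B'" by (simp add: B'_def nB l_def)
  have nA': "1 - inner A' A' = l * (1 - k)" unfolding A'_def k_def by (rule refl_facts[OF c mA lm])
  have nB': "1 - inner B' B' = l * (1 - k)" unfolding B'_def k_def AB(1) by (rule refl_facts[OF c mB lm])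
  have dAB: "inner (A - B) (A - B) = 2*k - 2*p"
    by (simp add: ip k_def p_def AB(1) inner_commute)
  have dA'B': "inner (A' - B') (A' - B') = l^2 * (2*k - 2*p)"
  proof -
    have "A' - B' = l *\<^sub>R (A - B)" by (simp add: A'_def B'_def algebra_simps)
    then show ?thesis using dAB by (simp add: power2_eq_square)
  qed
  have dBB': "inner (B - B') (B - B') = (1 - l)^2 * m"
  proof -
    have "B - B' = (1 - l) *\<^sub>R (B - c)" by (simp add: B'_def algebra_simps)
    moreover have "inner (B - c) (B - c) = m" using nB by (simp add: power2_norm_eq_inner)
    ultimately show ?thesis by (simp add: power2_eq_square)
  qed
  have dAA': "inner (A - A') (A - A') = (1 - l)^2 * m"
  proof -
    have "A - A' = (1 - l) *\<^sub>R (A - c)" by (simp add: A'_def algebra_simps)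
    moreover have "inner (A - c) (A - c) = m" using nA by (simp add: power2_norm_eq_inner)
    ultimately show ?thesis by (simp add: power2_eq_square)
  qed
  have dAB': "inner (A - B') (A - B') = inner (B - A') (B - A')"
    unfolding A'_def B'_def using AB by (simp add: ip inner_commute algebra_simps)
  have k1': "1 - k > 0" using k1 by simp
  have dl1: "dl A B = (2*k - 2*p) / (1 - k)^2"
    unfolding dl_def dAB using AB(1) k_def by (simp add: power2_eq_square)
  have dl2: "dl B' A' = dl A B"
  proof -
    have "inner (B' - A') (B' - A') = l^2 * (2*k - 2*p)"
      using dA'B' by (metis inner_commute minus_diff_eq ip(3,4) inner_minus_left inner_minus_right)
    then have "dl B' A' = (l^2 * (2*k - 2*p)) / ((l * (1 - k)) * (l * (1 - k)))"
      unfolding dl_def using nA' nB' by simp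
    also have "... = (l^2 * (2*k - 2*p)) / (l^2 * (1 - k)^2)" by (simp add: power2_eq_square mult_ac)
    also have "... = (2*k - 2*p) / (1 - k)^2" using l0 by simp
    finally show ?thesis using dl1 by simp
  qed
  have key: "(1 - l)^2 * m = l * (2*k - 2*p)"
  proof -
    have "m - R^2 = k - 2*t + 1" using c m_def by simp
    then have "(m - R^2)^2 = R^2 * (2*k - 2*p)" using eq dAB k_def t_def by simp
    moreover have "1 - l = (m - R^2) / m" using mpos by (simp add: l_def field_simps)
    ultimately have "(1 - l)^2 * m = R^2 * (2*k - 2*p) / m" using mpos
      by (simp add: power_divide power2_eq_square)
    then show ?thesis by (simp add: l_def)
  qed
  have dl3: "dl B B' = dl A B"
  proof -
    have "dl B B' = ((1 - l)^2 * m) / ((1 - k) * (l * (1 - k)))"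
      unfolding dl_def dBB' using nB' AB(1) k_def by simp
    also have "... = (l * (2*k - 2*p)) / (l * (1 - k)^2)" unfolding key by (simp add: power2_eq_square mult_ac)
    also have "... = (2*k - 2*p) / (1 - k)^2" using l0 by simp
    finally show ?thesis using dl1 by simp
  qed
  have dl4: "dl A' A = dl A B"
  proof -
    have "dl A A' = ((1 - l)^2 * m) / ((1 - k) * (l * (1 - k)))"
      unfolding dl_def dAA' using nA' k_def by simp
    also have "... = (l * (2*k - 2*p)) / (l * (1 - k)^2)" unfolding key by (simp add: power2_eq_square mult_ac)
    also have "... = (2*k - 2*p) / (1 - k)^2" using l0 by simp
    finally show ?thesis using dl1 dl_sym[of A' A] by simp
  qed
  have dl5: "dl A B' = dl B A'"
    unfolding dl_def using dAB' nA' nB' AB(1) by simp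
  have pos: "dl A B > 0"
  proof -
    have "inner (A - B) (A - B) > 0" using AB(4) by simp
    then show ?thesis unfolding dl_def using AB k1' k_def by simp
  qed
  have h1: "hdist B B' = hdist A B" "hdist B' A' = hdist A B" "hdist A' A = hdist A B"
    by (simp_all add: hdist_dl dl2 dl3 dl4)
  have h2: "hdist A B' = hdist B A'" by (simp add: hdist_dl dl5)
  have hpos: "hdist A B > 0" unfolding hdist_dl using pos by simp
  have cop: "coplanar (klein ` {A, B, B', A'})"
  proof -
    define ka where "ka = 2 / (1 + k)"
    define mu where "mu = 2 / (1 + inner A' A')"
    have kaA: "klein A = ka *\<^sub>R A" "klein B = ka *\<^sub>R B"
      using AB(1) by (simp_all add: klein_def ka_def k_def power2_norm_eq_inner)
    have muA: "klein A' = mu *\<^sub>R A'" "klein B' = mu *\<^sub>R B'"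
      using nA' nB' by (simp_all add: klein_def mu_def power2_norm_eq_inner)
    have ka0: "ka \<noteq> 0" unfolding ka_def using k1 AB(2) k_def
      by (smt (verit) inner_ge_zero divide_eq_0_iff)
    define r where "r = mu * l / ka"
    have bq: "mu *\<^sub>R B' = (-r) *\<^sub>R (ka *\<^sub>R A) + r *\<^sub>R (ka *\<^sub>R B) + 1 *\<^sub>R (mu *\<^sub>R A')"
      unfolding r_def A'_def B'_def using ka0 by (simp add: algebra_simps)
    have "mu *\<^sub>R B' \<in> affine hull {ka *\<^sub>R A, ka *\<^sub>R B, mu *\<^sub>R A'}"
      unfolding affine_hull_3 mem_Collect_eq
    proof (intro exI conjI)
      show "mu *\<^sub>R B' = (-r) *\<^sub>R (ka *\<^sub>R A) + r *\<^sub>R (ka *\<^sub>R B) + 1 *\<^sub>R (mu *\<^sub>R A')" by (rule bq)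
      show "-r + r + 1 = (1::real)" by simp
    qed
    then have "klein ` {A, B, B', A'} \<subseteq> affine hull {ka *\<^sub>R A, ka *\<^sub>R B, mu *\<^sub>R A'}"
      using hull_subset[of "{ka *\<^sub>R A, ka *\<^sub>R B, mu *\<^sub>R A'}" affine]
      by (auto simp: kaA muA)
    then show ?thesis unfolding coplanar_def by blast
  qed
  have sq: "regular_square A B B' A'"
    unfolding regular_square_def hangle_def
    using cop hpos h1 h2 by (simp add: hdist_sym)
  show ?thesis using sq eqA eqB by simp
qed

lemma lt4: "(i::nat) < 4 \<Longrightarrow> i = 0 \<or> i = 1 \<or> i = 2 \<or> i = 3" by arith

lemma vdir_inner: "i < 4 \<Longrightarrow> j < 4 \<Longrightarrow> inner (vdir i) (vdir j) = (if i = j then 3 else -1)"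
  apply (drule lt4, drule lt4)
  apply (elim disjE)
  apply (simp_all add: vdir_def inner_vec_def sum_3)
  done
lemma bok_props:
  fixes k c :: "real^3" and R :: real
  assumes k: "norm k < 1" and kc: "inner k c \<le> 1" and c: "inner c c = R^2 + 1" and R: "R \<ge> 0"
  shows "norm (ball_of_klein k) < 1" "dist (ball_of_klein k) c \<ge> R"
proof -
  define w where "w = sqrt (1 - (norm k)^2)"
  have w2: "w^2 = 1 - inner k k" unfolding w_def using k
    by (simp add: power2_norm_eq_inner[symmetric] abs_square_le_1 less_imp_le)
  have w0: "w > 0" unfolding w_def using k by (simp add: abs_square_less_1)
  have x: "ball_of_klein k = (1 / (1 + w)) *\<^sub>R k" by (simp add: ball_of_klein_def w_def)
  have nx: "inner (ball_of_klein k) (ball_of_klein k) = (1 - w) / (1 + w)"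
  proof -
    have "inner (ball_of_klein k) (ball_of_klein k) = inner k k / (1 + w)^2"
      by (simp add: x power2_eq_square)
    also have "... = (1 - w) * (1 + w) / ((1 + w) * (1 + w))" using w2
      by (simp add: power2_eq_square algebra_simps)
    also have "... = (1 - w) / (1 + w)" using w0 by simp
    finally show ?thesis .
  qed
  have "(norm (ball_of_klein k))^2 < 1"
    unfolding power2_norm_eq_inner nx using w0 by (simp add: field_simps)
  then show "norm (ball_of_klein k) < 1" by (simp add: abs_square_less_1)
  have "inner (ball_of_klein k - c) (ball_of_klein k - c)
      = inner (ball_of_klein k) (ball_of_klein k) + 1 + R^2 - 2 * inner (ball_of_klein k) c"
    using c by (simp add: ip inner_commute)
  also have "... = R^2 + (2 - 2 * inner k c) / (1 + w)"
  proof -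
    have ic: "inner (ball_of_klein k) c = inner k c / (1 + w)" by (simp add: x)
    have w1: "1 + w \<noteq> 0" using w0 by simp
    have "(1 - w) / (1 + w) + 1 = 2 / (1 + w)" using w1 by (simp add: field_simps)
    moreover have "(2 - 2 * inner k c) / (1 + w) = 2 / (1 + w) - 2 * (inner k c / (1 + w))"
      by (simp add: diff_divide_distrib)
    ultimately show ?thesis unfolding nx ic by linarith
  qed
  finally have dd: "(dist (ball_of_klein k) c)^2 = R^2 + (2 - 2 * inner k c) / (1 + w)"
    by (simp add: dist_norm power2_norm_eq_inner)
  have "(2 - 2 * inner k c) / (1 + w) \<ge> 0" using w0 kc by (intro divide_nonneg_pos) auto
  then have "R^2 \<le> (dist (ball_of_klein k) c)^2" unfolding dd by linarith
  then show "dist (ball_of_klein k) c \<ge> R" by (rule power2_le_imp_le) simp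
qed

theorem mainTheorem4:
  fixes n :: nat and a :: real
  assumes "n \<ge> 6"
    and "a > 0"
    and "cos (2 * pi / real n) = (a\<^sup>2 + 3) / (3 * (a\<^sup>2 - 1))"
  shows "prismatic_exists a"
proof -
  note n6 = assms(1) and a0 = assms(2) and hc = assms(3)
  define cs where "cs = cos (2 * pi / real n)"
  have cpos: "cs > 0"
  proof -
    have n0: "real n \<ge> 6" using n6 by simp
    have "2 * pi / real n \<le> pi / 3" using n0 pi_gt_zero by (simp add: field_simps)
    moreover have "2 * pi / real n > 0" using n0 by simp
    ultimately show ?thesis unfolding cs_def by (intro cos_gt_zero_pi) auto
  qed
  have cle: "cs \<le> 1" unfolding cs_def by simp
  have a2: "a^2 > 1"
  proof (rule ccontr)
    assume "\<not> a^2 > 1"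
    then have "3 * (a^2 - 1) \<le> 0" by simp
    moreover have "a^2 + 3 \<ge> 0" by (simp add: add_nonneg_nonneg)
    ultimately have "(a^2 + 3) / (3 * (a^2 - 1)) \<le> 0" by (intro divide_nonneg_nonpos)
    then show False using cpos hc cs_def by simp
  qed
  have a3: "a^2 \<ge> 3"
  proof -
    have "(a^2 + 3) / (3 * (a^2 - 1)) \<le> 1" using cle hc cs_def by simp
    then have "a^2 + 3 \<le> 3 * (a^2 - 1)" using a2 by (simp add: pos_divide_le_eq)
    then show ?thesis by simp
  qed
  define b where "b = a / sqrt 3"
  define R where "R = sqrt (a^2 - 1)"
  have R2: "R^2 = a^2 - 1" using a2 by (simp add: R_def)
  have R0: "R > 0" using a2 by (simp add: R_def)
  have b0: "b > 0" using a0 by (simp add: b_def)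
  have b2: "3 * b^2 = a^2" by (simp add: b_def power_divide)
  have Rge: "R \<ge> sqrt 2" unfolding R_def using a3 by (intro real_sqrt_le_mono) simp
  have bge: "b \<ge> 1"
  proof -
    have "b^2 \<ge> 1^2" using b2 a3 by simp
    then show ?thesis by (rule power2_le_imp_le) (use b0 in simp)
  qed
  define be where "be = 2*b + 2* sqrt 2 * R"
  have be6: "be \<ge> 6"
  proof -
    have "sqrt 2 * R \<ge> sqrt 2 * sqrt 2" by (rule mult_left_mono[OF Rge]) simp
    then have "sqrt 2 * R \<ge> 2" by simp
    then show ?thesis unfolding be_def using bge by simp
  qed
  define D where "D = sqrt (be^2 - 12)"
  have be2: "be^2 - 12 > 0"
  proof -
    have "be^2 \<ge> 6^2" by (rule power_mono[OF be6]) simp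
    then show ?thesis by simp
  qed
  have D2: "D^2 = be^2 - 12" using be2 by (simp add: D_def)
  have D0: "D > 0" using be2 by (simp add: D_def)
  have DB: "D < be"
  proof -
    have d: "D^2 < be^2" using D2 by simp
    have "0 \<le> be" using be6 by simp
    then show ?thesis using power2_less_imp_less[OF d] by blast
  qed
  define s where "s = (be - D) / 6"
  have s0: "s > 0" using DB by (simp add: s_def)
  have squad: "3 * s^2 - be * s + 1 = 0"
  proof -
    have "36 * (3 * s^2 - be * s + 1) = 3 * D^2 - 3 * be^2 + 36"
      by (simp add: s_def power2_eq_square field_simps)
    then show ?thesis using D2 by simp
  qed
  have s3: "3 * s^2 < 1"
  proof -
    have "D * D < be * D" using DB D0 by (intro mult_strict_right_mono) auto
    then have "be^2 - 12 < be * D" using D2 by (simp add: power2_eq_square)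
    then have "be * (be - D) < 12" by (simp add: algebra_simps power2_eq_square)
    then have "be * s < 2" by (simp add: s_def)
    then show ?thesis using squad by simp
  qed
  have key: "3 * s^2 - 2 * s * b + 1 = 2 * sqrt 2 * R * s"
    using squad unfolding be_def by (simp add: algebra_simps)
  have eq8: "(3 * s^2 - 2 * s * b + 1)^2 = R^2 * (8 * s^2)"
    unfolding key by (simp add: power_mult_distrib)
  have kpos: "3 * s^2 - 2 * s * b + 1 > 0" unfolding key using R0 s0 by simp
  define q where "q = (\<lambda>j. (-s) *\<^sub>R vdir j)"
  have qq: "inner (q i) (q j) = s^2 * (if i = j then 3 else -1)" if "i < 4" "j < 4" for i j
    using that by (simp add: q_def vdir_inner power2_eq_square)
  have Pc: "P_center a i = b *\<^sub>R vdir i" for i by (simp add: P_center_def b_def)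
  have qc: "inner (q j) (P_center a i) = - s * b * (if j = i then 3 else -1)" if "i < 4" "j < 4" for i j
    using that by (simp add: q_def Pc vdir_inner)
  have cc: "inner (P_center a i) (P_center a i) = R^2 + 1" if "i < 4" for i
    using that b2 R2 by (simp add: Pc vdir_inner power2_eq_square)
  have PR: "P_radius a = R" by (simp add: P_radius_def R_def)
  have qd: "inner (q j - q k) (q j - q k) = 8 * s^2" if "j < 4" "k < 4" "j \<noteq> k" for j k
    using that by (simp add: ip qq inner_commute[of "q k" "q j"])
  have dlq: "dl (q j) (q k) = 8 * s^2 / (1 - 3 * s^2)^2" if "j < 4" "k < 4" "j \<noteq> k" for j k
    using that by (simp add: dl_def qd qq power2_eq_square mult.commute)
  have dlq_pos: "8 * s^2 / (1 - 3 * s^2)^2 > 0" using s0 s3 by simp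
  have SQ: "regular_square (q j) (q k) (reflP a i (q k)) (reflP a i (q j))"
    if "i < 4" "j < 4" "k < 4" "j \<noteq> i" "k \<noteq> i" "j \<noteq> k" for i j k
  proof -
    have "regular_square (q j) (q k)
      (P_center a i + (R^2/(norm (q k - P_center a i))^2) *\<^sub>R (q k - P_center a i))
      (P_center a i + (R^2/(norm (q j - P_center a i))^2) *\<^sub>R (q j - P_center a i))"
    proof (rule square_lemma[OF R0 cc[OF that(1)]])
      show "inner (q j) (q j) = inner (q k) (q k)" using that by (simp add: qq)
      show "inner (q j) (q j) < 1" using that s3 by (simp add: qq)
      show "inner (q j) (P_center a i) = inner (q k) (P_center a i)" using that by (simp add: qc)
      show "q j \<noteq> q k"
      proof
        assume "q j = q k"
        then have "inner (q j - q k) (q j - q k) = 0" by simp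
        then show False using qd[OF that(2,3,6)] s0 by simp
      qed
      show "(inner (q j) (q j) - 2 * inner (q j) (P_center a i) + 1)^2
          = R^2 * inner (q j - q k) (q j - q k)"
        using that eq8 by (simp add: qq qc qd mult_ac)
    qed
    then show ?thesis by (simp add: reflP_def PR)
  qed
  have AL: "aligned_regular_tet q"
    unfolding aligned_regular_tet_def
  proof (intro conjI allI impI)
    fix i :: nat assume i: "i < 4"
    have "(norm (q i))^2 < 1" using i s3 by (simp add: power2_norm_eq_inner qq)
    then show "norm (q i) < 1" by (simp add: abs_square_less_1)
  next
    show "hdist (q 0) (q 1) > 0" unfolding hdist_dl using dlq[of 0 1] dlq_pos s0 s3 by simp
  next
    fix i j :: nat assume "i < 4" "j < 4" "i \<noteq> j"
    then show "hdist (q i) (q j) = hdist (q 0) (q 1)" by (simp add: hdist_dl dlq)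
  next
    fix i :: nat assume i: "i < 4"
    show "hdist 0 (q i) = hdist 0 (q 0)" using i by (simp add: hdist_def power2_norm_eq_inner qq)
  next
    fix i :: nat assume i: "i < 4"
    show "\<exists>t>0. \<forall>j<4. j \<noteq> i \<longrightarrow> klein (q j) \<bullet> vdir i = t"
    proof (intro exI conjI allI impI)
      show "2 * s / (1 + 3 * s^2) > 0" using s0 by (simp add: add_pos_nonneg)
      fix j assume "j < 4" "j \<noteq> i"
      then show "klein (q j) \<bullet> vdir i = 2 * s / (1 + 3 * s^2)"
        using i by (simp add: klein_def power2_norm_eq_inner qq) (simp add: q_def vdir_inner)
    qed
  qed
  define K where "K = ball (0::real^3) 1 \<inter> (\<Inter>i\<in>{..<4}. {k. inner (P_center a i) k \<le> 1})"
  have convK: "convex K" unfolding K_def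
    by (intro convex_Int convex_INT convex_ball convex_halfspace_le) 
  have kq: "klein (q j) \<in> K" if j: "j < 4" for j
  proof -
    define ka where "ka = 2 / (1 + 3 * s^2)"
    have kl: "klein (q j) = ka *\<^sub>R q j" using j by (simp add: klein_def power2_norm_eq_inner qq ka_def)
    have d1: "1 + 3 * s^2 > 0" by (simp add: add_pos_nonneg)
    have "inner (klein (q j)) (klein (q j)) = ka^2 * (3 * s^2)" using j by (simp add: kl qq power2_eq_square)
    also have "... = 12 * s^2 / (1 + 3 * s^2)^2" by (simp add: ka_def power_divide)
    also have "... < 1"
    proof -
      have e: "(1 + 3 * s^2)^2 - 12 * s^2 = (1 - 3 * s^2)^2" by (simp add: power2_eq_square algebra_simps)
      have p: "(1 - 3 * s^2)^2 > 0" using s3 by simp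
      have "12 * s^2 < (1 + 3 * s^2)^2" using e p by linarith
      then show ?thesis using d1 by (simp add: divide_less_eq)
    qed
    finally have n1: "norm (klein (q j)) < 1"
      by (simp add: power2_norm_eq_inner[symmetric] abs_square_less_1)
    have h: "inner (P_center a i) (klein (q j)) \<le> 1" if i: "i < 4" for i
    proof (cases "i = j")
      case True
      have "inner (P_center a i) (klein (q j)) = ka * (- s * b * 3)"
        using i j True by (simp add: kl inner_commute qc)
      also have "... \<le> 0" using s0 b0 d1 by (simp add: ka_def mult_nonneg_nonpos)
      finally show ?thesis by simp
    next
      case False
      have "inner (P_center a i) (klein (q j)) = ka * (s * b)"
        using i j False by (simp add: kl inner_commute qc)
      also have "... = 2 * s * b / (1 + 3 * s^2)" by (simp add: ka_def)
      also have "... \<le> 1" using kpos d1 by (simp add: divide_le_eq)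
      finally show ?thesis .
    qed
    show ?thesis unfolding K_def using n1 h by simp
  qed
  have HH: "hhull (q ` {..<4}) \<subseteq> tetP a"
  proof
    fix x assume "x \<in> hhull (q ` {..<4})"
    then obtain k where k: "k \<in> convex hull (klein ` q ` {..<4})" and x: "x = ball_of_klein k"
      unfolding hhull_def by auto
    have "convex hull (klein ` q ` {..<4}) \<subseteq> K"
      using kq convK by (intro hull_minimal) auto
    then have kK: "k \<in> K" using k by blast
    then have kn: "norm k < 1" and kc: "\<And>i. i < 4 \<Longrightarrow> inner k (P_center a i) \<le> 1"
      unfolding K_def by (auto simp: inner_commute)
    show "x \<in> tetP a" unfolding tetP_def x PR
      using bok_props(1)[OF kn kc[of 0] cc[of 0]] bok_props(2)[OF kn kc cc] R0 by auto
  qed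
  show ?thesis unfolding prismatic_exists_def
    using AL HH SQ by blast
qed

end
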